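(* Let $a>0$ and let $h:[0,a)\to\mathbb{R}$ be a function which is bounded from below such that $h(0)=0$ and $h'_+(0)=0$. Then there exists a separately convex function $f:(-a,a)^2\to\mathbb{R}$ such that its trace $g(t)=f(t,t)$ is an odd function with $g'(0)=0$ and $g(t)\le h(t)$ for $0\le t<a$.
   Context: A function $f$ defined on an open set $U\subset\mathbb{R}^2$ is called separately convex if it is convex on every line segment contained in $U$ that is parallel to a coordinate axis. $h'_+(0)$ denotes the right derivative of $h$ at $0$. *)

theory Defs
  imports "HOL-Analysis.Analysis"
begin

definition sep_convex_on :: "(real \<times> real) set \<Rightarrow> (real \<times> real \<Rightarrow> real) \<Rightarrow> bool" where
  "sep_convex_on U f \<longleftrightarrow>
     (\<forall>y x1 x2. closed_segment (x1, y) (x2, y) \<subseteq> U \<longrightarrow>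
        convex_on (closed_segment x1 x2) (\<lambda>x. f (x, y))) \<and>
     (\<forall>x y1 y2. closed_segment (x, y1) (x, y2) \<subseteq> U \<longrightarrow>
        convex_on (closed_segment y1 y2) (\<lambda>y. f (x, y)))"

end

theory Submission
  imports Defs
begin


definition wq :: "real \<Rightarrow> real" where "wq m = 1 + m / (4 * (1 + m\<^sup>2))"
definition wq1 :: "real \<Rightarrow> real" where "wq1 m = (1 - m\<^sup>2) / (4 * (1 + m\<^sup>2)\<^sup>2)"
definition wq2 :: "real \<Rightarrow> real" where "wq2 m = (m^3 - 3*m) / (2 * (1 + m\<^sup>2)^3)"
lemma pos1: "(1::real) + m\<^sup>2 > 0" by (simp add: add_pos_nonneg)
lemma abs_m_le: "2 * \<bar>m\<bar> \<le> 1 + (m::real)\<^sup>2"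
proof -
  have "0 \<le> (\<bar>m\<bar> - 1)\<^sup>2" by simp
  then show ?thesis by (simp add: power2_eq_square algebra_simps)
qed
lemma abs_div_le: fixes A B c :: real assumes "0 < B" "\<bar>A\<bar> \<le> c * B" shows "\<bar>A / B\<bar> \<le> c"
  using assms by (simp add: abs_divide pos_divide_le_eq)

lemma wq_bounds: "7/8 \<le> wq m" "wq m \<le> 9/8"
proof -
  have p: "1 + m\<^sup>2 > 0" by (rule pos1)
  have h: "\<bar>m / (4 * (1 + m\<^sup>2))\<bar> \<le> 1/8"
    using abs_m_le[of m] p by (intro abs_div_le) auto
  have e: "wq m = 1 + m / (4 * (1 + m\<^sup>2))" by (simp add: wq_def)
  show "7/8 \<le> wq m" using abs_le_D2[OF h] e by linarith
  show "wq m \<le> 9/8" using abs_le_D1[OF h] e by linarith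
qed

lemma wq1_bound: "\<bar>wq1 m\<bar> \<le> 1/4"
proof -
  have p: "1 + m\<^sup>2 > 0" by (rule pos1)
  have q: "(1 + m\<^sup>2)\<^sup>2 = 1 + 2*m\<^sup>2 + m\<^sup>2 * m\<^sup>2" by (simp add: power2_eq_square algebra_simps)
  have "\<bar>1 - m\<^sup>2\<bar> \<le> (1 + m\<^sup>2)\<^sup>2" unfolding q by (simp add: abs_le_iff) 
  then show ?thesis unfolding wq1_def using p by (intro abs_div_le) auto
qed

lemma wq2_bound: "\<bar>wq2 m\<bar> \<le> 1"
proof -
  have p: "1 + m\<^sup>2 > 0" by (rule pos1)
  define u where "u = \<bar>m\<bar>"
  have u0: "u \<ge> 0" by (simp add: u_def)
  have m2: "m\<^sup>2 = u * u" by (simp add: u_def power2_eq_square)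
  have t: "\<bar>m^3 - 3*m\<bar> \<le> \<bar>m^3\<bar> + \<bar>3*m\<bar>" by (rule abs_triangle_ineq4)
  have "\<bar>m^3\<bar> = u * u * u" by (simp add: u_def power3_eq_cube abs_mult)
  then have t2: "\<bar>m^3 - 3*m\<bar> \<le> u * u * u + 3 * u" using t by (simp add: abs_mult u_def)
  have key: "2 * (1 + u*u)^3 - (u * u * u + 3 * u) = 2*(u - 3/4)\<^sup>2 + 7/8 + (u*u) * (6*(u - 1/12)\<^sup>2 + 95/24) + 2 * (u*u*u)\<^sup>2"
    by (simp add: power2_eq_square power3_eq_cube algebra_simps)
  have "0 \<le> 2*(u - 3/4)\<^sup>2 + 7/8 + (u*u) * (6*(u - 1/12)\<^sup>2 + 95/24) + 2 * (u*u*u)\<^sup>2"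
    using u0 by (intro add_nonneg_nonneg mult_nonneg_nonneg) auto
  then have "u * u * u + 3 * u \<le> 2 * (1 + u*u)^3" using key u0 by linarith
  then have "\<bar>m^3 - 3*m\<bar> \<le> 1 * (2 * (1 + m\<^sup>2)^3)" using t2 m2 by simp
  then show ?thesis unfolding wq2_def using p by (intro abs_div_le) auto
qed

lemma wq_deriv: "(wq has_real_derivative wq1 m) (at m)"
proof -
  have p: "1 + m\<^sup>2 \<noteq> 0" using pos1[of m] by linarith
  show ?thesis
  unfolding wq_def[abs_def] wq1_def
  apply (auto intro!: derivative_eq_intros)
   apply (use p in simp)
  apply (subst frac_eq_eq)
    apply (use p in simp)
   apply (use p in simp)
  apply algebra
  done
qed
lemma wq1_deriv: "(wq1 has_real_derivative wq2 m) (at m)"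
proof -
  have p: "1 + m\<^sup>2 \<noteq> 0" using pos1[of m] by linarith
  show ?thesis
  unfolding wq1_def[abs_def] wq2_def
  apply (auto intro!: derivative_eq_intros)
   apply (use p in simp)
  apply (subst frac_eq_eq)
    apply (use p in simp)
   apply (use p in simp)
  apply algebra
  done
qed




definition hub :: "real \<Rightarrow> real \<Rightarrow> real" where
  "hub d w = (if \<bar>d\<bar> \<le> w then d\<^sup>2 / (2 * w) + w / 2 else \<bar>d\<bar>)"
definition blk :: "real \<Rightarrow> real \<Rightarrow> real" where
  "blk x y = hub ((x - y) / 2) (wq ((x + y) / 2)) - (x + y) / 16 - 1 / 2"

definition dd :: "real \<Rightarrow> real \<Rightarrow> real" where "dd b x = (x - b) / 2"
definition mm :: "real \<Rightarrow> real \<Rightarrow> real" where "mm b x = (x + b) / 2"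
definition WW :: "real \<Rightarrow> real \<Rightarrow> real" where "WW b x = wq (mm b x)"
definition ss :: "real \<Rightarrow> real \<Rightarrow> real" where "ss b x = dd b x / WW b x"
definition Psi :: "real \<Rightarrow> real \<Rightarrow> real" where
  "Psi b x = ss b x + (1 - ss b x * ss b x) * (wq1 (mm b x) / 2)"

lemma WW_pos: "WW b x \<ge> 7/8" unfolding WW_def by (rule wq_bounds)
lemma WW_le: "WW b x \<le> 9/8" unfolding WW_def by (rule wq_bounds)

lemma dd_deriv: "(dd b has_real_derivative 1/2) (at x)"
  unfolding dd_def[abs_def] by (auto intro!: derivative_eq_intros)
lemma mm_deriv: "(mm b has_real_derivative 1/2) (at x)"
  unfolding mm_def[abs_def] by (auto intro!: derivative_eq_intros)

lemma WW_deriv: "(WW b has_real_derivative wq1 (mm b x) * (1/2)) (at x)"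
proof -
  have "((\<lambda>x. wq (mm b x)) has_real_derivative wq1 (mm b x) * (1/2)) (at x)"
    by (rule DERIV_chain2[OF wq_deriv mm_deriv])
  then show ?thesis unfolding WW_def[abs_def] .
qed

lemma q_deriv: "((\<lambda>x. wq1 (mm b x) / 2) has_real_derivative wq2 (mm b x) / 4) (at x)"
proof -
  have "((\<lambda>x. wq1 (mm b x)) has_real_derivative wq2 (mm b x) * (1/2)) (at x)"
    by (rule DERIV_chain2[OF wq1_deriv mm_deriv])
  then have "((\<lambda>x. wq1 (mm b x) / 2) has_real_derivative wq2 (mm b x) * (1/2) / 2) (at x)"
    by (rule DERIV_cdivide)
  then show ?thesis by simp
qed

lemma ss_deriv: "(ss b has_real_derivative (1 - ss b x * wq1 (mm b x)) / (2 * WW b x)) (at x)"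
proof -
  have ne: "WW b x \<noteq> 0" using WW_pos[of b x] by linarith
  have "((\<lambda>x. dd b x / WW b x) has_real_derivative
     (1/2 * WW b x - dd b x * (wq1 (mm b x) * (1/2))) / (WW b x * WW b x)) (at x)"
    by (rule DERIV_divide[OF dd_deriv WW_deriv ne])
  moreover have "(1/2 * WW b x - dd b x * (wq1 (mm b x) * (1/2))) / (WW b x * WW b x)
      = (1 - ss b x * wq1 (mm b x)) / (2 * WW b x)"
    unfolding ss_def using ne by (simp add: field_simps)
  ultimately show ?thesis unfolding ss_def[abs_def] by simp
qed

definition EE :: "real \<Rightarrow> real \<Rightarrow> real" where
  "EE b x = (1 - ss b x * wq1 (mm b x))\<^sup>2 / (2 * WW b x) + (1 - ss b x * ss b x) * (wq2 (mm b x) / 4)"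

lemma Psi_deriv: "(Psi b has_real_derivative EE b x) (at x)"
proof -
  let ?s' = "(1 - ss b x * wq1 (mm b x)) / (2 * WW b x)"
  have s: "(ss b has_real_derivative ?s') (at x)" by (rule ss_deriv)
  have ss2: "((\<lambda>x. 1 - ss b x * ss b x) has_real_derivative 0 - (?s' * ss b x + ?s' * ss b x)) (at x)"
    by (intro DERIV_diff DERIV_const DERIV_mult s)
  have "((\<lambda>x. ss b x + (1 - ss b x * ss b x) * (wq1 (mm b x) / 2)) has_real_derivative
     ?s' + ((0 - (?s' * ss b x + ?s' * ss b x)) * (wq1 (mm b x) / 2) + wq2 (mm b x) / 4 * (1 - ss b x * ss b x))) (at x)"
    by (intro DERIV_add DERIV_mult s ss2 q_deriv)
  moreover have "?s' + ((0 - (?s' * ss b x + ?s' * ss b x)) * (wq1 (mm b x) / 2) + wq2 (mm b x) / 4 * (1 - ss b x * ss b x)) = EE b x"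
    unfolding EE_def using WW_pos[of b x] by (simp add: power2_eq_square field_simps)
  ultimately show ?thesis unfolding Psi_def[abs_def] by simp
qed

lemma EE_nonneg: assumes "\<bar>ss b x\<bar> \<le> 1" shows "EE b x \<ge> 0"
proof -
  define S where "S = ss b x"
  define P where "P = wq1 (mm b x)"
  define Q where "Q = wq2 (mm b x)"
  define W where "W = WW b x"
  have S: "\<bar>S\<bar> \<le> 1" using assms S_def by simp
  have P: "\<bar>P\<bar> \<le> 1/4" unfolding P_def by (rule wq1_bound)
  have Q: "\<bar>Q\<bar> \<le> 1" unfolding Q_def by (rule wq2_bound)
  have W1: "W \<ge> 7/8" "W \<le> 9/8" unfolding W_def by (rule WW_pos, rule WW_le)
  have "\<bar>S * P\<bar> \<le> 1 * (1/4)" unfolding abs_mult using S P by (intro mult_mono) auto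
  then have A: "1 - S * P \<ge> 3/4" by (simp add: abs_le_iff)
  then have "(1 - S * P)\<^sup>2 \<ge> (3/4)\<^sup>2" by (intro power_mono) auto
  then have A2: "(1 - S * P)\<^sup>2 \<ge> 9/16" by (simp add: power2_eq_square)
  have "(1 - S * P)\<^sup>2 / (2 * W) \<ge> (9/16) / (2 * W)" using A2 W1 by (intro divide_right_mono) auto
  moreover have "(9/16) / (2 * W) \<ge> 1/4" using W1 by (simp add: field_simps)
  ultimately have T1: "(1 - S * P)\<^sup>2 / (2 * W) \<ge> 1/4" by linarith
  have SS: "0 \<le> 1 - S * S" "1 - S * S \<le> 1" using S by (auto simp: abs_le_iff) (smt (verit) mult_le_one mult_minus_left mult_minus_right)
  have "\<bar>(1 - S * S) * (Q / 4)\<bar> \<le> 1 * (1/4)" unfolding abs_mult using SS Q by (intro mult_mono) auto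
  then have T2: "(1 - S * S) * (Q / 4) \<ge> - (1/4)" by (simp add: abs_le_iff)
  have "EE b x = (1 - S * P)\<^sup>2 / (2 * W) + (1 - S * S) * (Q / 4)"
    unfolding EE_def S_def P_def Q_def W_def by simp
  then show ?thesis using T1 T2 by linarith
qed



lemma ev_pos: fixes f :: "real \<Rightarrow> real"
  assumes "isCont f x" "f x > 0" shows "eventually (\<lambda>y. f y > 0) (nhds x)"
proof -
  have "eventually (\<lambda>y. f y > 0) (at x)"
    using assms unfolding isCont_def by (rule order_tendstoD(1))
  then show ?thesis using assms(2) by (simp add: eventually_nhds_conv_at)
qed

lemma DERIV_either:
  fixes f g h :: "real \<Rightarrow> real"
  assumes ev: "eventually (\<lambda>y. f y = g y \<or> f y = h y) (nhds x)"
    and fx: "f x = g x" "g x = h x"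
    and dg: "(g has_real_derivative D) (at x)" and dh: "(h has_real_derivative D) (at x)"
  shows "(f has_real_derivative D) (at x)"
proof -
  have tg: "((\<lambda>y. (g y - g x) / (y - x)) \<longlongrightarrow> D) (at x)" using dg by (simp add: has_field_derivative_iff)
  have th: "((\<lambda>y. (h y - h x) / (y - x)) \<longlongrightarrow> D) (at x)" using dh by (simp add: has_field_derivative_iff)
  have ev': "eventually (\<lambda>y. f y = g y \<or> f y = h y) (at x)"
    using ev by (simp add: eventually_nhds_conv_at)
  have "((\<lambda>y. (f y - f x) / (y - x)) \<longlongrightarrow> D) (at x)"
  proof (rule tendstoI)
    fix e :: real assume e: "e > 0"
    have "eventually (\<lambda>y. dist ((g y - g x) / (y - x)) D < e) (at x)" using tendstoD[OF tg e] .
    moreover have "eventually (\<lambda>y. dist ((h y - h x) / (y - x)) D < e) (at x)" using tendstoD[OF th e] .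
    ultimately show "eventually (\<lambda>y. dist ((f y - f x) / (y - x)) D < e) (at x)"
      using ev' by eventually_elim (use fx in auto)
  qed
  then show ?thesis by (simp add: has_field_derivative_iff)
qed

definition II :: "real \<Rightarrow> real \<Rightarrow> real" where
  "II b x = (dd b x)\<^sup>2 / (2 * WW b x) + WW b x / 2"

lemma II_deriv: "(II b has_real_derivative Psi b x / 2) (at x)"
proof -
  have ne: "WW b x \<noteq> 0" using WW_pos[of b x] by linarith
  have d1: "((\<lambda>x. dd b x * dd b x) has_real_derivative (1/2 * dd b x + 1/2 * dd b x)) (at x)"
    by (intro DERIV_mult dd_deriv)
  have d2: "((\<lambda>x. 2 * WW b x) has_real_derivative 2 * (wq1 (mm b x) * (1/2))) (at x)"
    by (intro DERIV_cmult WW_deriv)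
  have ne2: "2 * WW b x \<noteq> 0" using ne by simp
  have dd0: "((\<lambda>x. dd b x * dd b x / (2 * WW b x) + WW b x / 2) has_real_derivative
     ((1/2 * dd b x + 1/2 * dd b x) * (2 * WW b x) - dd b x * dd b x * (2 * (wq1 (mm b x) * (1/2)))) / (2 * WW b x * (2 * WW b x))
     + wq1 (mm b x) * (1/2) / 2) (at x)"
    by (intro DERIV_add DERIV_divide[OF d1 d2 ne2] DERIV_cdivide WW_deriv)
  moreover have eq: "((1/2 * dd b x + 1/2 * dd b x) * (2 * WW b x) - dd b x * dd b x * (2 * (wq1 (mm b x) * (1/2)))) / (2 * WW b x * (2 * WW b x))
     + wq1 (mm b x) * (1/2) / 2 = Psi b x / 2"
    unfolding Psi_def ss_def using ne by (simp add: field_simps)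
  show ?thesis unfolding II_def[abs_def] power2_eq_square by (rule DERIV_cong[OF dd0 eq])
qed

lemma WW_cont: "isCont (WW b) x" using WW_deriv by (rule DERIV_isCont)
lemma dd_cont: "isCont (dd b) x" using dd_deriv by (rule DERIV_isCont)

definition Phi1 :: "real \<Rightarrow> real \<Rightarrow> real" where
  "Phi1 b x = (if \<bar>dd b x\<bar> \<le> WW b x then Psi b x else sgn (dd b x))"

lemma blk_eq: "blk x b = hub (dd b x) (WW b x) - (x + b) / 16 - 1 / 2"
  unfolding blk_def dd_def WW_def mm_def by simp

lemma lin_deriv: "((\<lambda>x. (x + b) / 16 + 1 / 2) has_real_derivative 1/16) (at x)"
  by (auto intro!: derivative_eq_intros)

lemma blk_deriv: "((\<lambda>x. blk x b) has_real_derivative Phi1 b x / 2 - 1/16) (at x)"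
proof -
  have Wp: "WW b x > 0" using WW_pos[of b x] by linarith
  have ne: "WW b x \<noteq> 0" using Wp by simp
  let ?lin = "\<lambda>x. (x + b) / 16 + 1 / 2"
  have bl: "\<And>y. blk y b = hub (dd b y) (WW b y) - ?lin y" by (simp add: blk_eq)
  have dI: "((\<lambda>y. II b y - ?lin y) has_real_derivative Psi b x / 2 - 1/16) (at x)"
    by (intro DERIV_diff II_deriv lin_deriv)
  have dP: "((\<lambda>y. dd b y - ?lin y) has_real_derivative 1/2 - 1/16) (at x)"
    by (intro DERIV_diff dd_deriv lin_deriv)
  have dM: "((\<lambda>y. - dd b y - ?lin y) has_real_derivative - (1/2) - 1/16) (at x)"
    by (intro DERIV_diff DERIV_minus dd_deriv lin_deriv)
  have cW: "isCont (WW b) x" by (rule WW_cont)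
  have cd: "isCont (dd b) x" by (rule dd_cont)
  consider (inn) "\<bar>dd b x\<bar> < WW b x" | (pos) "dd b x > WW b x" | (neg) "dd b x < - WW b x"
    | (bp) "dd b x = WW b x" | (bn) "dd b x = - WW b x" by linarith
  then show ?thesis
  proof cases
    case inn
    have "eventually (\<lambda>y. WW b y - \<bar>dd b y\<bar> > 0) (nhds x)"
      using inn by (intro ev_pos continuous_intros cW cd) auto
    then have "eventually (\<lambda>y. blk y b = II b y - ?lin y) (nhds x)"
      by eventually_elim (auto simp: bl hub_def II_def)
    then have "((\<lambda>y. blk y b) has_real_derivative Psi b x / 2 - 1/16) (at x)"
      using dI by (subst DERIV_cong_ev[OF refl _ refl]) auto
    then show ?thesis using inn by (simp add: Phi1_def)
  next
    case pos
    have "eventually (\<lambda>y. dd b y - WW b y > 0) (nhds x)"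
      using pos by (intro ev_pos continuous_intros cW cd) auto
    then have "eventually (\<lambda>y. blk y b = dd b y - ?lin y) (nhds x)"
    proof eventually_elim
      case (elim y) then have "WW b y > 0" using WW_pos[of b y] by linarith
      then show ?case using elim by (auto simp: bl hub_def)
    qed
    then have "((\<lambda>y. blk y b) has_real_derivative 1/2 - 1/16) (at x)"
      using dP by (subst DERIV_cong_ev[OF refl _ refl]) auto
    then show ?thesis using pos Wp by (simp add: Phi1_def)
  next
    case neg
    have "eventually (\<lambda>y. - dd b y - WW b y > 0) (nhds x)"
      using neg by (intro ev_pos continuous_intros cW cd) auto
    then have "eventually (\<lambda>y. blk y b = - dd b y - ?lin y) (nhds x)"
    proof eventually_elim
      case (elim y) then have "WW b y > 0" using WW_pos[of b y] by linarith
      then show ?case using elim by (auto simp: bl hub_def)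
    qed
    then have "((\<lambda>y. blk y b) has_real_derivative - (1/2) - 1/16) (at x)"
      using dM by (subst DERIV_cong_ev[OF refl _ refl]) auto
    then show ?thesis using neg Wp by (simp add: Phi1_def)
  next
    case bp
    have ps: "Psi b x = 1" using bp ne unfolding Psi_def ss_def by simp
    have "eventually (\<lambda>y. dd b y > 0) (nhds x)"
      using bp Wp by (intro ev_pos cd) auto
    then have ev: "eventually (\<lambda>y. blk y b = II b y - ?lin y \<or> blk y b = dd b y - ?lin y) (nhds x)"
      by eventually_elim (auto simp: bl hub_def II_def)
    have "((\<lambda>y. blk y b) has_real_derivative 1/2 - 1/16) (at x)"
    proof (rule DERIV_either[OF ev])
      show "blk x b = II b x - ?lin x" using bp Wp by (simp add: bl hub_def II_def)
      show "II b x - ?lin x = dd b x - ?lin x" using bp ne by (simp add: II_def power2_eq_square)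
      show "((\<lambda>y. II b y - ?lin y) has_real_derivative 1/2 - 1/16) (at x)" using dI ps by simp
      show "((\<lambda>y. dd b y - ?lin y) has_real_derivative 1/2 - 1/16) (at x)" using dP .
    qed
    then show ?thesis using bp ps Wp by (simp add: Phi1_def)
  next
    case bn
    have ps: "Psi b x = -1" using bn ne unfolding Psi_def ss_def by simp
    have "eventually (\<lambda>y. - dd b y > 0) (nhds x)"
      using bn Wp by (intro ev_pos continuous_intros cd) auto
    then have ev: "eventually (\<lambda>y. blk y b = II b y - ?lin y \<or> blk y b = - dd b y - ?lin y) (nhds x)"
      by eventually_elim (auto simp: bl hub_def II_def)
    have "((\<lambda>y. blk y b) has_real_derivative - (1/2) - 1/16) (at x)"
    proof (rule DERIV_either[OF ev])
      show "blk x b = II b x - ?lin x" using bn Wp by (simp add: bl hub_def II_def)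
      show "II b x - ?lin x = - dd b x - ?lin x" using bn ne by (simp add: II_def power2_eq_square)
      show "((\<lambda>y. II b y - ?lin y) has_real_derivative - (1/2) - 1/16) (at x)" using dI ps by simp
      show "((\<lambda>y. - dd b y - ?lin y) has_real_derivative - (1/2) - 1/16) (at x)" using dM .
    qed
    then show ?thesis using bn ps Wp by (simp add: Phi1_def)
  qed
qed



lemma rp_mono: assumes "x < y" shows "dd b x - WW b x < dd b y - WW b y"
proof -
  have "(\<lambda>x. dd b x - WW b x) x < (\<lambda>x. dd b x - WW b x) y"
  proof (rule DERIV_pos_imp_increasing[OF assms])
    fix z
    have d: "((\<lambda>x. dd b x - WW b x) has_real_derivative 1/2 - wq1 (mm b z) * (1/2)) (at z)"
      by (intro DERIV_diff dd_deriv WW_deriv)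
    have "1/2 - wq1 (mm b z) * (1/2) > 0" using wq1_bound[of "mm b z"] by (simp add: abs_le_iff)
    then show "\<exists>y. ((\<lambda>x. dd b x - WW b x) has_real_derivative y) (at z) \<and> 0 < y" using d by blast
  qed
  then show ?thesis by simp
qed

lemma rm_mono: assumes "x < y" shows "dd b x + WW b x < dd b y + WW b y"
proof -
  have "(\<lambda>x. dd b x + WW b x) x < (\<lambda>x. dd b x + WW b x) y"
  proof (rule DERIV_pos_imp_increasing[OF assms])
    fix z
    have d: "((\<lambda>x. dd b x + WW b x) has_real_derivative 1/2 + wq1 (mm b z) * (1/2)) (at z)"
      by (intro DERIV_add dd_deriv WW_deriv)
    have "1/2 + wq1 (mm b z) * (1/2) > 0" using wq1_bound[of "mm b z"] by (simp add: abs_le_iff)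
    then show "\<exists>y. ((\<lambda>x. dd b x + WW b x) has_real_derivative y) (at z) \<and> 0 < y" using d by blast
  qed
  then show ?thesis by simp
qed

lemma Psi_bounds: assumes "\<bar>dd b x\<bar> \<le> WW b x" shows "- 1 \<le> Psi b x" "Psi b x \<le> 1"
proof -
  have Wp: "WW b x > 0" using WW_pos[of b x] by linarith
  define S where "S = ss b x"
  define P where "P = wq1 (mm b x)"
  have S: "\<bar>S\<bar> \<le> 1" unfolding S_def ss_def using assms Wp by (simp add: abs_divide divide_le_eq)
  have P: "\<bar>P\<bar> \<le> 1/4" unfolding P_def by (rule wq1_bound)
  have e: "Psi b x = S + (1 - S * S) * (P / 2)" unfolding Psi_def S_def P_def by simp
  have S1: "0 \<le> 1 - S" "0 \<le> 1 + S" using S by (auto simp: abs_le_iff)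
  have "(1 + S) * P / 2 \<le> 1"
  proof -
    have "\<bar>1 + S\<bar> \<le> 2" using S S1 by (simp add: abs_le_iff)
    then have "\<bar>(1 + S) * P\<bar> \<le> 2 * (1/4)" unfolding abs_mult using P by (intro mult_mono) auto
    then show ?thesis by (simp add: abs_le_iff)
  qed
  then have "(1 - S) * ((1 + S) * P / 2 - 1) \<le> 0" using S1 by (simp add: mult_nonneg_nonpos)
  then show "Psi b x \<le> 1" unfolding e by (simp add: algebra_simps)
  have "(1 - S) * P / 2 \<ge> - 1"
  proof -
    have "\<bar>1 - S\<bar> \<le> 2" using S S1 by (simp add: abs_le_iff)
    then have "\<bar>(1 - S) * P\<bar> \<le> 2 * (1/4)" unfolding abs_mult using P by (intro mult_mono) auto
    then show ?thesis by (simp add: abs_le_iff)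
  qed
  then have "(1 + S) * (1 + (1 - S) * P / 2) \<ge> 0" using S1 by simp
  then show "- 1 \<le> Psi b x" unfolding e by (simp add: algebra_simps)
qed

lemma Phi1_bounds: "- 1 \<le> Phi1 b x" "Phi1 b x \<le> 1"
  using Psi_bounds[of b x] by (auto simp: Phi1_def sgn_if)

lemma Phi1_mono: assumes "x \<le> y" shows "Phi1 b x \<le> Phi1 b y"
proof -
  have Wx: "WW b x > 0" using WW_pos[of b x] by linarith
  have Wy: "WW b y > 0" using WW_pos[of b y] by linarith
  consider (L) "dd b x < - WW b x" | (R) "dd b y > WW b y" | (M) "dd b x \<ge> - WW b x" "dd b y \<le> WW b y" by linarith
  then show ?thesis
  proof cases
    case L
    then have "Phi1 b x = -1" using Wx by (simp add: Phi1_def)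
    then show ?thesis using Phi1_bounds[of b y] by simp
  next
    case R
    then have "Phi1 b y = 1" using Wy by (simp add: Phi1_def)
    then show ?thesis using Phi1_bounds[of b x] by simp
  next
    case M
    have inner: "\<bar>dd b z\<bar> \<le> WW b z" if "x \<le> z" "z \<le> y" for z
    proof -
      have "dd b z + WW b z \<ge> dd b x + WW b x"
        using rm_mono[of x z b] that by (cases "x = z") auto
      moreover have "dd b z - WW b z \<le> dd b y - WW b y"
        using rp_mono[of z y b] that by (cases "z = y") auto
      ultimately show ?thesis using M by (simp add: abs_le_iff)
    qed
    have "Psi b x \<le> Psi b y"
    proof (rule DERIV_nonneg_imp_nondecreasing[OF assms])
      fix z assume z: "x \<le> z" "z \<le> y"
      have Wz: "WW b z > 0" using WW_pos[of b z] by linarith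
      have "\<bar>ss b z\<bar> \<le> 1" using inner[OF z] Wz unfolding ss_def by (simp add: abs_divide divide_le_eq)
      then show "\<exists>y. (Psi b has_real_derivative y) (at z) \<and> 0 \<le> y"
        using Psi_deriv[of b z] EE_nonneg by blast
    qed
    then show ?thesis using inner[of x] inner[of y] assms by (simp add: Phi1_def)
  qed
qed

lemma blk_convex_x: "convex_on UNIV (\<lambda>x. blk x b)"
proof (rule convex_on_realI[where f' = "\<lambda>x. Phi1 b x / 2 - 1/16"])
  show "connected (UNIV :: real set)" by simp
  show "\<And>x. x \<in> UNIV \<Longrightarrow> ((\<lambda>x. blk x b) has_real_derivative Phi1 b x / 2 - 1 / 16) (at x)"
    by (rule blk_deriv)
  show "\<And>x y. x \<in> UNIV \<Longrightarrow> y \<in> UNIV \<Longrightarrow> x \<le> y \<Longrightarrow> Phi1 b x / 2 - 1 / 16 \<le> Phi1 b y / 2 - 1 / 16"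
    using Phi1_mono by simp
qed

lemma hub_sym: "hub (- d) w = hub d w" by (simp add: hub_def)

lemma blk_sym: "blk x y = blk y x"
proof -
  have a: "\<bar>(x - y) / 2\<bar> = \<bar>(y - x) / 2\<bar>" by (simp add: abs_minus_commute)
  have b: "((x - y) / 2)\<^sup>2 = ((y - x) / 2)\<^sup>2" by (simp add: power2_eq_square algebra_simps)
  show ?thesis unfolding blk_def hub_def a b by (simp add: add.commute)
qed

lemma blk_convex_y: "convex_on UNIV (\<lambda>y. blk b y)"
  using blk_convex_x[of b] by (simp add: blk_sym)




lemma blk_bound: "\<bar>blk x y\<bar> \<le> \<bar>x\<bar> + \<bar>y\<bar>"
proof -
  define d where "d = (x - y) / 2"
  define m where "m = (x + y) / 2"
  define W where "W = wq m"
  have W1: "W \<ge> 7/8" unfolding W_def by (rule wq_bounds)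
  have hub_up: "hub d W \<le> \<bar>d\<bar> + W / 2"
  proof (cases "\<bar>d\<bar> \<le> W")
    case True
    have "d\<^sup>2 / (2 * W) \<le> \<bar>d\<bar> / 2"
    proof -
      have "d\<^sup>2 = \<bar>d\<bar> * \<bar>d\<bar>" by (simp add: power2_eq_square)
      also have "\<dots> \<le> \<bar>d\<bar> * W" using True by (intro mult_left_mono) auto
      finally show ?thesis using W1 by (simp add: divide_simps)
    qed
    then show ?thesis using True by (simp add: hub_def)
  next
    case False then show ?thesis using W1 by (simp add: hub_def)
  qed
  have hub_lo: "hub d W \<ge> W / 2"
  proof (cases "\<bar>d\<bar> \<le> W")
    case True
    have "d\<^sup>2 / (2 * W) \<ge> 0" using W1 by simp
    then show ?thesis using True by (simp add: hub_def)
  next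
    case False then show ?thesis using W1 by (simp add: hub_def)
  qed
  have Wm: "\<bar>W - 1\<bar> \<le> \<bar>m\<bar> / 4"
  proof -
    have p: "1 + m\<^sup>2 \<ge> 1" by simp
    have "\<bar>m / (4 * (1 + m\<^sup>2))\<bar> = \<bar>m\<bar> / (4 * (1 + m\<^sup>2))" by (simp add: abs_divide)
    also have "\<dots> \<le> \<bar>m\<bar> / 4" using p by (intro divide_left_mono) (auto simp: add_pos_nonneg)
    finally show ?thesis unfolding W_def wq_def by simp
  qed
  define z where "z = (x + y) / 16"
  define S where "S = \<bar>x\<bar> + \<bar>y\<bar>"
  have e: "blk x y = hub d W - z - 1 / 2" unfolding blk_def d_def m_def W_def z_def by simp
  have S0: "S \<ge> 0" unfolding S_def by simp
  have f1: "\<bar>d\<bar> \<le> S / 2" unfolding d_def S_def by (simp add: abs_le_iff) (smt (verit) abs_ge_self abs_minus_le_zero)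
  have f2: "\<bar>m\<bar> \<le> S / 2" unfolding m_def S_def by (simp add: abs_le_iff) (smt (verit) abs_ge_self abs_minus_le_zero)
  have f3: "\<bar>z\<bar> \<le> S / 16" unfolding z_def S_def by (simp add: abs_le_iff) (smt (verit) abs_ge_self abs_minus_le_zero)
  have f4: "W - 1 \<le> \<bar>m\<bar> / 4" "1 - W \<le> \<bar>m\<bar> / 4" using abs_le_D1[OF Wm] abs_le_D2[OF Wm] by auto
  have "blk x y \<le> S" using e hub_up f1 f2 abs_le_D2[OF f3] f4 S0 by linarith
  moreover have "- blk x y \<le> S" using e hub_lo f1 f2 abs_le_D1[OF f3] f4 S0 by linarith
  ultimately show ?thesis unfolding S_def by (simp add: abs_le_iff)
qed

lemma blk_diag: "blk t t = - (t ^ 3) / (8 * (1 + t\<^sup>2))"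
proof -
  have W1: "wq t \<ge> 7/8" by (rule wq_bounds)
  have "blk t t = wq t / 2 - t / 8 - 1/2" unfolding blk_def hub_def using W1 by simp
  also have "\<dots> = - (t ^ 3) / (8 * (1 + t\<^sup>2))"
    unfolding wq_def using pos1[of t] by (simp add: field_simps power2_eq_square power3_eq_cube)
  finally show ?thesis .
qed

lemma convex_suminf:
  fixes g :: "nat \<Rightarrow> real \<Rightarrow> real"
  assumes cv: "\<And>n. convex_on UNIV (g n)" and sm: "\<And>x. summable (\<lambda>n. g n x)"
  shows "convex_on UNIV (\<lambda>x. \<Sum>n. g n x)"
  unfolding convex_on_def
proof (intro conjI ballI allI impI)
  show "convex (UNIV :: real set)" by simp
  fix x y :: real and u v :: real
  assume u: "u \<ge> 0" and v: "v \<ge> 0" and uv: "u + v = 1"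
  have le: "g n (u *\<^sub>R x + v *\<^sub>R y) \<le> u * g n x + v * g n y" for n
    using cv[of n] u v uv unfolding convex_on_def by auto
  have s1: "summable (\<lambda>n. u * g n x)" by (intro summable_mult sm)
  have s2: "summable (\<lambda>n. v * g n y)" by (intro summable_mult sm)
  have "(\<Sum>n. g n (u *\<^sub>R x + v *\<^sub>R y)) \<le> (\<Sum>n. u * g n x + v * g n y)"
    by (intro suminf_le le sm summable_add s1 s2)
  also have "\<dots> = (\<Sum>n. u * g n x) + (\<Sum>n. v * g n y)" using suminf_add[OF s1 s2] by simp
  also have "\<dots> = u * (\<Sum>n. g n x) + v * (\<Sum>n. g n y)" using suminf_mult[OF sm] by simp
  finally show "(\<Sum>n. g n (u *\<^sub>R x + v *\<^sub>R y)) \<le> u * (\<Sum>n. g n x) + v * (\<Sum>n. g n y)" .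
qed

lemma convex_scale:
  fixes g :: "real \<Rightarrow> real"
  assumes "convex_on UNIV g" "r > 0" "k \<ge> 0"
  shows "convex_on UNIV (\<lambda>x. k * g (x / r))"
  unfolding convex_on_def
proof (intro conjI ballI allI impI)
  show "convex (UNIV :: real set)" by simp
  fix x y u v :: real
  assume u: "u \<ge> 0" and v: "v \<ge> 0" and uv: "u + v = 1"
  have "g (u *\<^sub>R (x / r) + v *\<^sub>R (y / r)) \<le> u * g (x / r) + v * g (y / r)"
    using assms(1) u v uv unfolding convex_on_def by blast
  moreover have "u *\<^sub>R (x / r) + v *\<^sub>R (y / r) = (u *\<^sub>R x + v *\<^sub>R y) / r" by (simp add: add_divide_distrib)
  ultimately have "g ((u *\<^sub>R x + v *\<^sub>R y) / r) \<le> u * g (x / r) + v * g (y / r)" by simp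
  then have "k * g ((u *\<^sub>R x + v *\<^sub>R y) / r) \<le> k * (u * g (x / r) + v * g (y / r))"
    using assms(3) by (rule mult_left_mono)
  then show "k * g ((u *\<^sub>R x + v *\<^sub>R y) / r) \<le> u * (k * g (x / r)) + v * (k * g (y / r))"
    by (simp add: algebra_simps)
qed




lemma trace_term:
  fixes D c t :: real
  assumes D: "D > 0"
  shows "c * D * blk (t / D) (t / D) = t * (- c * t\<^sup>2 / (8 * (D\<^sup>2 + t\<^sup>2)))"
proof -
  define u where "u = t / D"
  have t: "t = u * D" using D by (simp add: u_def)
  have p: "1 + u\<^sup>2 > 0" by (rule pos1)
  have e: "D\<^sup>2 + (u * D)\<^sup>2 = D\<^sup>2 * (1 + u\<^sup>2)" by (simp add: power2_eq_square algebra_simps)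
  have "c * D * blk u u = c * D * (- (u ^ 3) / (8 * (1 + u\<^sup>2)))"
    by (simp add: blk_diag)
  also have "\<dots> = (u * D) * (- c * (u * D)\<^sup>2 / (8 * (D\<^sup>2 * (1 + u\<^sup>2))))"
  proof -
    have nz: "D \<noteq> 0" "1 + u\<^sup>2 \<noteq> 0" using D p by auto
    show ?thesis using nz apply (simp add: divide_simps) by algebra
  qed
  finally show ?thesis unfolding u_def[symmetric] t[symmetric] e[symmetric] by (simp add: t)
qed

lemma q_bound: fixes D c t :: real assumes D: "D > 0" "c \<ge> 0"
  shows "\<bar>- c * t\<^sup>2 / (8 * (D\<^sup>2 + t\<^sup>2))\<bar> \<le> c / 8"
proof -
  have "D\<^sup>2 > 0" using D(1) by (rule zero_less_power)
  then have p: "D\<^sup>2 + t\<^sup>2 > 0" by (simp add: add_pos_nonneg)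
  define X where "X = c * (t\<^sup>2 / (D\<^sup>2 + t\<^sup>2))"
  have "t\<^sup>2 \<le> D\<^sup>2 + t\<^sup>2" by simp
  then have "t\<^sup>2 / (D\<^sup>2 + t\<^sup>2) \<le> 1" using p by simp
  then have X1: "X \<le> c" unfolding X_def using D mult_left_mono[of _ 1 c] by fastforce
  have X0: "X \<ge> 0" unfolding X_def using D p by simp
  have e: "- c * t\<^sup>2 / (8 * (D\<^sup>2 + t\<^sup>2)) = - X / 8" unfolding X_def by simp
  show ?thesis unfolding e using X0 X1 by simp
qed




theorem corollary8p2:
  fixes a :: real and h :: "real \<Rightarrow> real"
  assumes "a > 0"
    and "\<exists>B. \<forall>t\<in>{0..<a}. B \<le> h t"
    and "h 0 = 0"
    and "(h has_real_derivative 0) (at 0 within {0..<a})"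
  shows "\<exists>f :: real \<times> real \<Rightarrow> real.
           sep_convex_on ({-a<..<a} \<times> {-a<..<a}) f \<and>
           (\<forall>t\<in>{-a<..<a}. f (-t, -t) = - f (t, t)) \<and>
           ((\<lambda>t. f (t, t)) has_real_derivative 0) (at 0) \<and>
           (\<forall>t\<in>{0..<a}. f (t, t) \<le> h t)"
proof -
  obtain Bl where Bl: "\<And>t. t \<in> {0..<a} \<Longrightarrow> Bl \<le> h t" using assms(2) by blast
  have lim: "((\<lambda>y. (h y - h 0) / (y - 0)) \<longlongrightarrow> 0) (at 0 within {0..<a})"
    using assms(4) by (simp add: has_field_derivative_iff)
  have exD: "\<exists>\<delta>. \<delta> > 0 \<and> (\<forall>t\<in>{0..<a}. t < \<delta> \<longrightarrow> \<bar>h t\<bar> \<le> t / 2^k)" for k :: nat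
  proof -
    have e: "(1::real) / 2^k > 0" by simp
    have "eventually (\<lambda>y. dist ((h y - h 0) / (y - 0)) 0 < 1 / 2^k) (at 0 within {0..<a})"
      using tendstoD[OF lim e] .
    then obtain \<delta> where \<delta>: "\<delta> > 0"
      and h\<delta>: "\<And>y. y \<in> {0..<a} \<Longrightarrow> y \<noteq> 0 \<and> dist y 0 < \<delta> \<longrightarrow> dist ((h y - h 0) / (y - 0)) 0 < 1 / 2^k"
      unfolding eventually_at by blast
    have "\<bar>h t\<bar> \<le> t / 2^k" if t: "t \<in> {0..<a}" "t < \<delta>" for t
    proof (cases "t = 0")
      case True then show ?thesis using assms(3) by simp
    next
      case False
      with t have tp: "t > 0" by simp
      have "\<bar>h t / t\<bar> < 1 / 2^k" using h\<delta>[OF t(1)] t False tp assms(3) by (simp add: dist_real_def)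
      then have "\<bar>h t\<bar> / t < 1 / 2^k" using tp by (simp add: abs_divide)
      then have "\<bar>h t\<bar> < t / 2^k" using tp by (simp add: divide_simps mult.commute)
      then show ?thesis by simp
    qed
    then show ?thesis using \<delta> by blast
  qed
  then have "\<forall>k. \<exists>\<delta>. \<delta> > 0 \<and> (\<forall>t\<in>{0..<a}. t < \<delta> \<longrightarrow> \<bar>h t\<bar> \<le> t / 2^k)" by blast
  then obtain D where D: "\<And>k. D k > 0" and hD: "\<And>k t. t \<in> {0..<a} \<Longrightarrow> t < D k \<Longrightarrow> \<bar>h t\<bar> \<le> t / 2^k"
    by (metis choice)

  define M where "M = 32 + 16 * \<bar>Bl\<bar> / D 0"
  have M32: "M \<ge> 32" unfolding M_def using D[of 0] by simp
  define c where "c n = M / 2 ^ n" for n :: nat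
  have c0: "c n > 0" for n unfolding c_def using M32 by simp
  have sc: "summable c"
  proof -
    have "c = (\<lambda>n. M * (1/2) ^ n)" by (rule ext) (simp add: c_def power_one_over)
    then show ?thesis by (simp del: power_one_over)
  qed
  define T where "T n x y = c n * D n * blk (x / D n) (y / D n)" for n x y
  have Tb: "\<bar>T n x y\<bar> \<le> c n * (\<bar>x\<bar> + \<bar>y\<bar>)" for n x y
  proof -
    have "\<bar>T n x y\<bar> = c n * D n * \<bar>blk (x / D n) (y / D n)\<bar>"
      unfolding T_def using c0[of n] D[of n] by (simp add: abs_mult)
    also have "\<dots> \<le> c n * D n * (\<bar>x / D n\<bar> + \<bar>y / D n\<bar>)"
      using c0[of n] D[of n] blk_bound[of "x / D n" "y / D n"] by (intro mult_left_mono) auto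
    also have "\<dots> = c n * (\<bar>x\<bar> + \<bar>y\<bar>)" using D[of n] by (simp add: abs_divide field_simps)
    finally show ?thesis .
  qed
  have Ts: "summable (\<lambda>n. T n x y)" for x y
    by (rule summable_comparison_test'[where g = "\<lambda>n. c n * (\<bar>x\<bar> + \<bar>y\<bar>)" and N = 0])
       (use Tb sc summable_mult2 in auto)
  have Tsym: "T n x y = T n y x" for n x y unfolding T_def by (simp add: blk_sym)
  define F where "F p = (\<Sum>n. T n (fst p) (snd p))" for p
  have Fcx: "convex_on UNIV (\<lambda>x. F (x, y))" for y
  proof -
    have "convex_on UNIV (\<lambda>x. \<Sum>n. T n x y)"
    proof (rule convex_suminf)
      fix n
      have "convex_on UNIV (\<lambda>x. c n * D n * blk (x / D n) (y / D n))"
        using convex_scale[OF blk_convex_x[of "y / D n"] D[of n], of "c n * D n"] c0[of n] D[of n] by simp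
      then show "convex_on UNIV (\<lambda>x. T n x y)" unfolding T_def .
    qed (rule Ts)
    then show ?thesis unfolding F_def by simp
  qed
  have Fsym: "F (x, y) = F (y, x)" for x y unfolding F_def by (simp add: Tsym)
  have Fcy: "convex_on UNIV (\<lambda>y. F (x, y))" for x
    using Fcx[of x] by (simp add: Fsym)
  have sep: "sep_convex_on ({-a<..<a} \<times> {-a<..<a}) F"
    unfolding sep_convex_on_def
    by (intro conjI allI impI convex_on_subset[OF Fcx] convex_on_subset[OF Fcy] convex_closed_segment subset_UNIV)
  define q where "q n t = - c n * t\<^sup>2 / (8 * ((D n)\<^sup>2 + t\<^sup>2))" for n t
  have Tq: "T n t t = t * q n t" for n t unfolding T_def q_def using trace_term[OF D[of n]] by simp
  have qb: "\<bar>q n t\<bar> \<le> c n / 8" for n t unfolding q_def using q_bound[OF D[of n]] c0[of n] by simp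
  have qs: "summable (\<lambda>n. q n t)" for t
    by (rule summable_comparison_test'[where g = "\<lambda>n. c n / 8" and N = 0])
       (use qb sc summable_divide in auto)
  define Q where "Q t = (\<Sum>n. q n t)" for t
  have FQ: "F (t, t) = t * Q t" for t
    unfolding F_def Q_def using Tq suminf_mult[OF qs, of t] by simp
  have odd: "F (- t, - t) = - F (t, t)" for t
  proof -
    have "q n (- t) = q n t" for n unfolding q_def by simp
    then have "Q (- t) = Q t" unfolding Q_def by simp
    then show ?thesis using FQ[of t] FQ[of "-t"] by simp
  qed
  have Qcont: "continuous_on UNIV Q"
  proof -
    have ul: "uniform_limit UNIV (\<lambda>n t. \<Sum>i<n. q i t) (\<lambda>t. \<Sum>i. q i t) sequentially"
      by (rule Weierstrass_m_test[where M = "\<lambda>n. c n / 8"]) (use qb sc summable_divide in auto)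
    have cq: "continuous_on UNIV (q i)" for i
    proof -
      have "D i ^ 2 > 0" using D[of i] by (rule zero_less_power)
      then have nz: "8 * ((D i)\<^sup>2 + t\<^sup>2) \<noteq> 0" for t by (smt (verit) zero_le_power2)
      show ?thesis unfolding q_def[abs_def] by (intro continuous_intros) (use nz in auto)
    qed
    have "continuous_on UNIV (\<lambda>t. \<Sum>i. q i t)"
      by (rule uniform_limit_theorem[OF _ ul]) (auto intro!: always_eventually continuous_on_sum cq)
    then show ?thesis unfolding Q_def[abs_def] .
  qed
  have Q0: "Q 0 = 0" unfolding Q_def q_def by simp
  have deriv: "((\<lambda>t. F (t, t)) has_real_derivative 0) (at 0)"
  proof -
    have "isCont Q 0" using Qcont by (simp add: continuous_on_eq_continuous_at)
    then have tq: "(Q \<longlongrightarrow> 0) (at 0)" using Q0 by (simp add: isCont_def)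
    have ev: "eventually (\<lambda>y. Q y = (F (y, y) - F (0, 0)) / (y - 0)) (at (0::real))"
      unfolding eventually_at_filter by (intro always_eventually) (simp add: FQ)
    have "((\<lambda>y. (F (y, y) - F (0, 0)) / (y - 0)) \<longlongrightarrow> 0) (at 0)"
      using tendsto_cong[OF ev] tq by simp
    then show ?thesis by (simp add: has_field_derivative_iff)
  qed
  have qnp: "q n t \<le> 0" for n t unfolding q_def using c0[of n] by (simp add: divide_nonpos_pos add_pos_nonneg)
  have Fle: "F (t, t) \<le> h t" if t: "t \<in> {0..<a}" for t
  proof -
    have t0: "t \<ge> 0" using t by simp
    have Tnp: "T n t t \<le> 0" for n using Tq[of n t] qnp[of n t] t0 by (simp add: mult_nonneg_nonpos)
    have Fs: "F (t, t) = (\<Sum>n. T n t t)" unfolding F_def by simp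
    show ?thesis
    proof (cases "\<exists>k. D k \<le> t")
      case False
      then have lt: "t < D k" for k by (simp add: not_le)
      have hle: "\<bar>h t\<bar> \<le> t / 2^k" for k using hD[OF t lt] .
      have h0: "h t \<ge> 0"
      proof (rule ccontr)
        assume "\<not> h t \<ge> 0"
        then have neg: "- h t > 0" by simp
        obtain n where n: "t / (- h t) < 2 ^ n" using real_arch_pow[of 2 "t / (- h t)"] by auto
        then have "t < 2^n * (- h t)" by (subst (asm) pos_divide_less_eq[OF neg]) assumption
        then have "t / 2^n < - h t" by (subst pos_divide_less_eq) (simp_all add: mult.commute)
        moreover have "- h t \<le> t / 2^n" using abs_le_D2[OF hle[of n]] .
        ultimately show False by simp
      qed
      have "F (t, t) \<le> (\<Sum>n. (0::real))" unfolding Fs by (intro suminf_le Ts Tnp summable_zero)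
      then show ?thesis using h0 by simp
    next
      case True
      define k0 where "k0 = (LEAST k. D k \<le> t)"
      have k0: "D k0 \<le> t" unfolding k0_def using True by (rule LeastI_ex)
      have Dk: "D k0 > 0" by (rule D)
      have tp: "t > 0" using k0 Dk by simp
      have sing: "(\<lambda>n. if n = k0 then T n t t else 0) sums T k0 t t" by (rule sums_single)
      have "F (t, t) \<le> (\<Sum>n. if n = k0 then T n t t else 0)"
        unfolding Fs by (intro suminf_le Ts sums_summable[OF sing]) (use Tnp in auto)
      also have "\<dots> = T k0 t t" using sums_unique[OF sing] by simp
      also have "\<dots> \<le> - c k0 * t / 16"
      proof -
        have "(D k0)\<^sup>2 \<le> t\<^sup>2" using k0 Dk by (intro power_mono) auto
        then have den: "(D k0)\<^sup>2 + t\<^sup>2 \<le> 2 * t\<^sup>2" by simp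
        have pos: "(D k0)\<^sup>2 + t\<^sup>2 > 0" using tp by (simp add: add_nonneg_pos)
        define r where "r = t\<^sup>2 / ((D k0)\<^sup>2 + t\<^sup>2)"
        have r: "r \<ge> 1/2" unfolding r_def using den pos by (simp add: divide_simps)
        have qe: "q k0 t = - c k0 * r / 8" unfolding q_def r_def by simp
        have "q k0 t \<le> - c k0 / 16" unfolding qe using r c0[of k0]
          by (simp add: divide_simps)
        then have "t * q k0 t \<le> t * (- c k0 / 16)" using t0 by (rule mult_left_mono)
        then show ?thesis using Tq[of k0 t] by (simp add: mult.commute)
      qed
      also have "\<dots> \<le> h t"
      proof (cases k0)
        case 0
        have c0e: "c k0 = M" unfolding c_def 0 by simp
        have "1 \<le> t / D 0" using k0 Dk 0 by simp
        then have "\<bar>Bl\<bar> * 1 \<le> \<bar>Bl\<bar> * (t / D 0)" by (intro mult_left_mono) auto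
        then have "\<bar>Bl\<bar> \<le> \<bar>Bl\<bar> * (t / D 0)" by simp
        also have "\<dots> = (16 * \<bar>Bl\<bar> / D 0) * t / 16" by simp
        also have "\<dots> \<le> M * t / 16" unfolding M_def using tp by (intro divide_right_mono mult_right_mono) auto
        finally have "\<bar>Bl\<bar> \<le> M * t / 16" .
        then have "- c k0 * t / 16 \<le> Bl" unfolding c0e by simp
        then show ?thesis using Bl[OF t] by simp
      next
        case (Suc j)
        have "\<not> D j \<le> t" using not_less_Least[of j "\<lambda>k. D k \<le> t"] unfolding k0_def[symmetric] Suc by simp
        then have "t < D j" by simp
        then have "- h t \<le> t / 2^j" using abs_le_D2[OF hD[OF t]] by blast
        then have "- (t / 2^j) \<le> h t" by linarith
        moreover have "c k0 * t / 16 \<ge> t / 2^j"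
        proof -
          have "c k0 = M / 2^(Suc j)" unfolding c_def Suc by simp
          also have "\<dots> \<ge> 32 / 2^(Suc j)" using M32 by (intro divide_right_mono) auto
          finally have "c k0 \<ge> 16 / 2^j" by simp
          then have "c k0 * t \<ge> 16 / 2^j * t" using t0 by (intro mult_right_mono)
          then show ?thesis by (simp add: mult.commute)
        qed
        ultimately show ?thesis by simp
      qed
      finally show ?thesis .
    qed
  qed
  show ?thesis
    by (intro exI[of _ F] conjI sep ballI odd deriv Fle) auto
qed

end
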